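(* Consider a canonical game (with $m\ge1$). (i) If the action groups satisfy $S_n\le A< B\le U(n)$, then neither player has a strong winning strategy. (ii) If the action groups satisfy $S_n\le B< A\le U(n)$, then neither player has a strong winning strategy.
   Context: Setting: a quantum system in $\mathbb{C}^n$ with computational basis $\ket{0},\dots,\ket{n-1}$, initial basis state $\ket{q_0}$, and target basis states $\ket{q_A}$ (player 1) and $\ket{q_B}$ (player 2) with $\ket{q_A}\neq\ket{q_B}$. Player 1's moves come from a subgroup $A\le U(n)$ and player 2's from a subgroup $B\le U(n)$; $A<B$ means $A$ is a proper subgroup of $B$. $S_n$ denotes the symmetric group, identified with the subgroup of $U(n)$ of $n\times n$ permutation matrices. Canonical game: $2m$ rounds; a strategy of player 1 is $\sigma_1=(A_1,\dots,A_m)$, $A_i\in A$, a strategy of player 2 is $\sigma_2=(B_1,\dots,B_m)$, $B_i\in B$, and the final state $B_mA_m\cdots B_1A_1\ket{q_0}$ is measured in the computational basis; player 1 wins on outcome $\ket{q_A}$, player 2 on outcome $\ket{q_B}$. A strategy of a player is a strong winning strategy if for every strategy of the opponent that player wins with probability $1$. *)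

theory Defs
  imports "HOL-Analysis.Analysis"
begin

type_synonym 'n cmat = "complex ^'n ^'n"
type_synonym 'n cvec = "complex ^'n"

definition adj :: "'n::finite cmat \<Rightarrow> 'n cmat" where
  "adj U = (\<chi> i j. cnj (U $ j $ i))"

text \<open>The unitary group U(n), with n = CARD('n).\<close>
definition unitary_group :: "'n::finite cmat set" where
  "unitary_group = {U. U ** adj U = mat 1 \<and> adj U ** U = mat 1}"

text \<open>Subgroup of U(n): contains identity, closed under product and inverse
  (the inverse of a unitary matrix is its conjugate transpose).\<close>
definition subgroup_U :: "'n::finite cmat set \<Rightarrow> bool" where
  "subgroup_U G \<longleftrightarrow> G \<subseteq> unitary_group \<and> mat 1 \<in> G \<and>
     (\<forall>X\<in>G. \<forall>Y\<in>G. X ** Y \<in> G) \<and> (\<forall>X\<in>G. adj X \<in> G)"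

definition proper_subgroup_U :: "'n::finite cmat set \<Rightarrow> 'n cmat set \<Rightarrow> bool" where
  "proper_subgroup_U A B \<longleftrightarrow> subgroup_U A \<and> subgroup_U B \<and> A \<subset> B"

definition perm_matrix :: "('n::finite \<Rightarrow> 'n) \<Rightarrow> 'n cmat" where
  "perm_matrix \<sigma> = (\<chi> i j. if i = \<sigma> j then 1 else 0)"

definition sym_group_mats :: "'n::finite cmat set" where
  "sym_group_mats = {perm_matrix \<sigma> | \<sigma>. \<sigma> permutes (UNIV :: 'n set)}"

definition ket :: "'n::finite \<Rightarrow> 'n cvec" where
  "ket q = (\<chi> i. if i = q then 1 else 0)"

text \<open>Final state B_m A_m ... B_1 A_1 |q0> for strategies
  sA = [A_1,...,A_m], sB = [B_1,...,B_m].\<close>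
definition final_state :: "'n::finite \<Rightarrow> 'n cmat list \<Rightarrow> 'n cmat list \<Rightarrow> 'n cvec" where
  "final_state q0 sA sB = foldl (\<lambda>v (X, Y). Y *v (X *v v)) (ket q0) (zip sA sB)"

definition outcome_prob :: "'n::finite \<Rightarrow> 'n cmat list \<Rightarrow> 'n cmat list \<Rightarrow> 'n \<Rightarrow> real" where
  "outcome_prob q0 sA sB q = (cmod (final_state q0 sA sB $ q))\<^sup>2"

text \<open>Strategy of a player with action group G in the 2m-round canonical game.\<close>
definition strategy :: "nat \<Rightarrow> 'n::finite cmat set \<Rightarrow> 'n cmat list \<Rightarrow> bool" where
  "strategy m G s \<longleftrightarrow> length s = m \<and> set s \<subseteq> G"

definition strong_winning_1 ::
  "nat \<Rightarrow> 'n::finite cmat set \<Rightarrow> 'n cmat set \<Rightarrow> 'n \<Rightarrow> 'n \<Rightarrow> 'n cmat list \<Rightarrow> bool" where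
  "strong_winning_1 m A B q0 qA s1 \<longleftrightarrow> strategy m A s1 \<and>
     (\<forall>s2. strategy m B s2 \<longrightarrow> outcome_prob q0 s1 s2 qA = 1)"

definition strong_winning_2 ::
  "nat \<Rightarrow> 'n::finite cmat set \<Rightarrow> 'n cmat set \<Rightarrow> 'n \<Rightarrow> 'n \<Rightarrow> 'n cmat list \<Rightarrow> bool" where
  "strong_winning_2 m A B q0 qB s2 \<longleftrightarrow> strategy m B s2 \<and>
     (\<forall>s1. strategy m A s1 \<longrightarrow> outcome_prob q0 s1 s2 qB = 1)"

end

theory Submission
  imports Defs
begin

definition stepM :: "'n::finite cmat \<Rightarrow> 'n cmat \<times> 'n cmat \<Rightarrow> 'n cmat" where
  "stepM M p = snd p ** (fst p ** M)"

lemma foldl_vec: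
  "foldl (\<lambda>v (X, Y). Y *v (X *v v)) (N *v v) xs = foldl stepM N xs *v v"
proof (induction xs arbitrary: N)
  case Nil then show ?case by simp
next
  case (Cons p xs)
  obtain X Y where p: "p = (X,Y)" by (cases p)
  have "Y *v (X *v (N *v v)) = (stepM N p) *v v"
    by (simp add: p stepM_def matrix_vector_mul_assoc)
  then show ?case using Cons[of "stepM N p"] by (simp add: p)
qed

lemma final_state_eq: "final_state q0 s1 s2 = foldl stepM (mat 1) (zip s1 s2) *v ket q0"
  unfolding final_state_def using foldl_vec[of "mat 1" "ket q0"] by simp

lemma foldl_start: "foldl stepM N xs = foldl stepM (mat 1) xs ** N"
proof (induction xs arbitrary: N)
  case Nil then show ?case by simp
next
  case (Cons p xs)
  have a: "foldl stepM N (p # xs) = foldl stepM (mat 1) xs ** stepM N p"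
    using Cons.IH[of "stepM N p"] by (simp only: foldl_Cons)
  have b: "stepM N p = stepM (mat 1) p ** N"
    by (simp add: stepM_def matrix_mul_assoc)
  have c: "foldl stepM (mat 1) (p # xs) = foldl stepM (mat 1) xs ** stepM (mat 1) p"
    using Cons.IH[of "stepM (mat 1) p"] by (simp only: foldl_Cons)
  show ?case by (simp only: a b c matrix_mul_assoc)
qed

lemma adj_mult: "adj (X ** Y) = adj Y ** adj X"
  by (simp add: adj_def matrix_matrix_mult_def vec_eq_iff mult.commute)

lemma adj_one: "adj (mat 1 :: 'n::finite cmat) = mat 1"
  by (simp add: adj_def mat_def vec_eq_iff)

lemma unitary_mult:
  assumes "X \<in> unitary_group" "Y \<in> unitary_group"
  shows "X ** Y \<in> unitary_group"
proof -
  have x1: "X ** adj X = mat 1" and x2: "adj X ** X = mat 1"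
    and y1: "Y ** adj Y = mat 1" and y2: "adj Y ** Y = mat 1"
    using assms unfolding unitary_group_def by auto
  have "X ** Y ** adj (X ** Y) = X ** (Y ** adj Y) ** adj X"
    by (simp only: adj_mult matrix_mul_assoc)
  also have "\<dots> = mat 1" by (simp only: y1 matrix_mul_rid x1)
  finally have 1: "X ** Y ** adj (X ** Y) = mat 1" .
  have "adj (X ** Y) ** (X ** Y) = adj Y ** (adj X ** X) ** Y"
    by (simp only: adj_mult matrix_mul_assoc)
  also have "\<dots> = mat 1" by (simp only: x2 matrix_mul_rid y2)
  finally show ?thesis using 1 unfolding unitary_group_def by blast
qed

lemma unitary_one: "(mat 1 :: 'n::finite cmat) \<in> unitary_group"
  by (simp add: unitary_group_def adj_one)

lemma foldl_unitary:
  assumes "\<forall>p\<in>set xs. fst p \<in> unitary_group \<and> snd p \<in> unitary_group"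
    and "N \<in> unitary_group"
  shows "foldl stepM N xs \<in> unitary_group"
  using assms
proof (induction xs arbitrary: N)
  case Nil then show ?case by simp
next
  case (Cons p xs)
  then show ?case by (simp add: stepM_def unitary_mult)
qed

lemma row_sum:
  assumes "M \<in> unitary_group"
  shows "(\<Sum>j\<in>UNIV. (cmod (M$i$j))\<^sup>2) = 1"
proof -
  have "M ** adj M = mat 1" using assms by (simp add: unitary_group_def)
  hence "(M ** adj M)$i$i = 1" by (simp add: mat_def)
  hence "(\<Sum>j\<in>UNIV. M$i$j * cnj (M$i$j)) = 1"
    by (simp only: matrix_matrix_mult_def adj_def vec_lambda_beta)
  moreover have "\<And>j. M$i$j * cnj (M$i$j) = complex_of_real ((cmod (M$i$j))\<^sup>2)"
    by (rule complex_norm_square[symmetric])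
  ultimately have "(\<Sum>j\<in>UNIV. complex_of_real ((cmod (M$i$j))\<^sup>2)) = 1"
    by (metis (no_types, lifting) sum.cong)
  hence "complex_of_real (\<Sum>j\<in>UNIV. (cmod (M$i$j))\<^sup>2) = 1"
    by (simp only: of_real_sum)
  thus ?thesis using of_real_eq_1_iff by blast
qed

lemma adj_adj: "adj (adj M) = M"
  by (simp add: adj_def vec_eq_iff)

lemma col_sum:
  assumes "M \<in> unitary_group"
  shows "(\<Sum>j\<in>UNIV. (cmod (M$j$i))\<^sup>2) = 1"
proof -
  have "adj M \<in> unitary_group" using assms unfolding unitary_group_def
    by (simp add: adj_adj)
  from row_sum[OF this, of i] show ?thesis by (simp add: adj_def)
qed

lemma two_ones:
  fixes f :: "'n::finite \<Rightarrow> real"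
  assumes "\<And>j. f j \<ge> 0" "a \<noteq> b" "f a = 1" "f b = 1"
  shows "sum f UNIV \<noteq> 1"
proof -
  have "sum f {a,b} \<le> sum f UNIV"
    by (rule sum_mono2) (use assms in auto)
  moreover have "sum f {a,b} = 2" using assms by simp
  ultimately show ?thesis by linarith
qed

lemma perm_left:
  "(perm_matrix (Transposition.transpose a b) ** U) $ i $ k = U $ (Transposition.transpose a b i) $ k"
proof -
  have "(perm_matrix (Transposition.transpose a b) ** U) $ i $ k =
     (\<Sum>j\<in>UNIV. (if j = Transposition.transpose a b i then U $ j $ k else 0))"
    unfolding matrix_matrix_mult_def perm_matrix_def vec_lambda_beta
    by (intro sum.cong refl) (auto simp del: transpose_same)
  then show ?thesis by simp
qed

lemma perm_right:
  "(U ** perm_matrix (Transposition.transpose a b)) $ i $ k = U $ i $ (Transposition.transpose a b k)"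
proof -
  have "(U ** perm_matrix (Transposition.transpose a b)) $ i $ k =
     (\<Sum>j\<in>UNIV. (if j = Transposition.transpose a b k then U $ i $ j else 0))"
    unfolding matrix_matrix_mult_def perm_matrix_def vec_lambda_beta
    by (intro sum.cong refl) (auto simp del: transpose_same)
  then show ?thesis by simp
qed

lemma mv_ket: "(X *v ket k) $ i = X $ i $ k"
proof -
  have "(X *v ket k) $ i = (\<Sum>j\<in>UNIV. if j = k then X $ i $ j else 0)"
    unfolding matrix_vector_mult_def ket_def vec_lambda_beta
    by (intro sum.cong refl) auto
  then show ?thesis by simp
qed

lemma perm_in: "perm_matrix (Transposition.transpose a b) \<in> sym_group_mats"
  unfolding sym_group_mats_def using permutes_swap_id[of a UNIV b] by auto

theorem theorem3:
  fixes A B :: "'n::finite cmat set" and q0 qA qB :: 'n and m :: nat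
  assumes "m \<ge> 1" and "qA \<noteq> qB"
  shows "((sym_group_mats \<subseteq> A \<and> proper_subgroup_U A B) \<or>
          (sym_group_mats \<subseteq> B \<and> proper_subgroup_U B A)) \<longrightarrow>
         (\<not> (\<exists>s1. strong_winning_1 m A B q0 qA s1)) \<and>
         (\<not> (\<exists>s2. strong_winning_2 m A B q0 qB s2))"
proof
  assume H: "((sym_group_mats \<subseteq> A \<and> proper_subgroup_U A B) \<or>
          (sym_group_mats \<subseteq> B \<and> proper_subgroup_U B A))"
  have SA: "sym_group_mats \<subseteq> A" and SB: "sym_group_mats \<subseteq> B"
    and GA: "subgroup_U A" and GB: "subgroup_U B"
    using H unfolding proper_subgroup_U_def by auto
  have UA: "A \<subseteq> unitary_group" and UB: "B \<subseteq> unitary_group"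
    and IA: "mat 1 \<in> A" and IB: "mat 1 \<in> B"
    using GA GB unfolding subgroup_U_def by auto
  define T where "T = (\<lambda>a b. perm_matrix (Transposition.transpose a b) :: 'n cmat)"
  have TA: "T a b \<in> A" and TB: "T a b \<in> B" for a b
    using perm_in SA SB unfolding T_def by blast+
  show "(\<not> (\<exists>s1. strong_winning_1 m A B q0 qA s1)) \<and>
         (\<not> (\<exists>s2. strong_winning_2 m A B q0 qB s2))"
  proof
    show "\<not> (\<exists>s1. strong_winning_1 m A B q0 qA s1)"
    proof
      assume "\<exists>s1. strong_winning_1 m A B q0 qA s1"
      then obtain s1 where s1: "strategy m A s1"
        and win: "\<And>s2. strategy m B s2 \<Longrightarrow> outcome_prob q0 s1 s2 qA = 1"
        unfolding strong_winning_1_def by blast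
      have len: "length s1 = m" and s1A: "set s1 \<subseteq> A" using s1 strategy_def by auto
      have ne: "s1 \<noteq> []" using len assms(1) by auto
      have s1eq: "s1 = butlast s1 @ [last s1]" using ne by simp
      have lb: "length (butlast s1) = length (replicate (m-1) (mat 1 :: 'n cmat))"
        using len by simp
      define N where "N = foldl stepM (mat 1) (zip (butlast s1) (replicate (m-1) (mat 1 :: 'n cmat)))"
      define U where "U = last s1 ** N"
      have "last s1 \<in> set s1" using ne by simp
      hence lastU: "last s1 \<in> unitary_group" using s1A UA by auto
      have "\<forall>p\<in>set (zip (butlast s1) (replicate (m-1) (mat 1 :: 'n cmat))).
          fst p \<in> unitary_group \<and> snd p \<in> unitary_group"
        using s1A UA unitary_one in_set_butlastD
        by (fastforce dest: set_zip_leftD set_zip_rightD)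
      hence NU: "N \<in> unitary_group" unfolding N_def
        using foldl_unitary unitary_one by blast
      have UU: "U \<in> unitary_group" unfolding U_def using lastU NU unitary_mult by blast
      have prob: "outcome_prob q0 s1 (replicate (m-1) (mat 1) @ [T qA b]) qA
          = (cmod (U $ (Transposition.transpose qA b qA) $ q0))\<^sup>2" for b
      proof -
        have "zip s1 (replicate (m-1) (mat 1) @ [T qA b]) =
              zip (butlast s1) (replicate (m-1) (mat 1)) @ [(last s1, T qA b)]"
          using lb by (subst s1eq) (simp add: zip_append)
        hence "final_state q0 s1 (replicate (m-1) (mat 1) @ [T qA b]) = (T qA b ** U) *v ket q0"
          by (simp add: final_state_eq stepM_def N_def U_def)
        thus ?thesis unfolding outcome_prob_def
          by (simp add: mv_ket T_def perm_left)
      qed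
      have st: "strategy m B (replicate (m-1) (mat 1) @ [T qA b])" for b
        using IB TB assms(1) by (auto simp: strategy_def)
      have 1: "(cmod (U $ qA $ q0))\<^sup>2 = 1" using win[OF st[of qA]] prob[of qA] by simp
      have 2: "(cmod (U $ qB $ q0))\<^sup>2 = 1" using win[OF st[of qB]] prob[of qB] by simp
      show False using two_ones[of "\<lambda>j. (cmod (U $ j $ q0))\<^sup>2", OF _ assms(2) 1 2]
        col_sum[OF UU, of q0] by simp
    qed
  next
    show "\<not> (\<exists>s2. strong_winning_2 m A B q0 qB s2)"
    proof
      assume "\<exists>s2. strong_winning_2 m A B q0 qB s2"
      then obtain s2 where s2: "strategy m B s2"
        and win: "\<And>s1. strategy m A s1 \<Longrightarrow> outcome_prob q0 s1 s2 qB = 1"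
        unfolding strong_winning_2_def by blast
      have len: "length s2 = m" and s2B: "set s2 \<subseteq> B" using s2 strategy_def by auto
      have ne: "s2 \<noteq> []" using len assms(1) by auto
      have s2eq: "s2 = hd s2 # tl s2" using ne by simp
      define N where "N = foldl stepM (mat 1) (zip (replicate (m-1) (mat 1 :: 'n cmat)) (tl s2))"
      define M where "M = N ** hd s2"
      have "hd s2 \<in> set s2" using ne by simp
      hence hdU: "hd s2 \<in> unitary_group" using s2B UB by auto
      have "\<forall>p\<in>set (zip (replicate (m-1) (mat 1 :: 'n cmat)) (tl s2)).
          fst p \<in> unitary_group \<and> snd p \<in> unitary_group"
        using s2B UB unitary_one list.set_sel(2)[OF ne]
        by (fastforce dest: set_zip_leftD set_zip_rightD)
      hence NU: "N \<in> unitary_group" unfolding N_def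
        using foldl_unitary unitary_one by blast
      have MU: "M \<in> unitary_group" unfolding M_def using hdU NU unitary_mult by blast
      have prob: "outcome_prob q0 (T q0 b # replicate (m-1) (mat 1)) s2 qB
          = (cmod (M $ qB $ (Transposition.transpose q0 b q0)))\<^sup>2" for b
      proof -
        have "zip (T q0 b # replicate (m-1) (mat 1)) s2 =
              (T q0 b, hd s2) # zip (replicate (m-1) (mat 1)) (tl s2)"
          by (subst s2eq) simp
        hence "final_state q0 (T q0 b # replicate (m-1) (mat 1)) s2 = (M ** T q0 b) *v ket q0"
          by (simp add: final_state_eq N_def M_def stepM_def matrix_mul_assoc
              foldl_start[of "hd s2 ** T q0 b"])
        thus ?thesis unfolding outcome_prob_def
          by (simp add: mv_ket T_def perm_right)
      qed
      have st: "strategy m A (T q0 b # replicate (m-1) (mat 1))" for b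
        using IA TA assms(1) by (auto simp: strategy_def)
      obtain j where j: "j \<noteq> q0" using assms(2) by metis
      have 1: "(cmod (M $ qB $ q0))\<^sup>2 = 1" using win[OF st[of q0]] prob[of q0] by simp
      have 2: "(cmod (M $ qB $ j))\<^sup>2 = 1" using win[OF st[of j]] prob[of j] by simp
      show False using two_ones[of "\<lambda>k. (cmod (M $ qB $ k))\<^sup>2", OF _ j[symmetric] 1 2]
        row_sum[OF MU, of qB] by simp
    qed
  qed
qed

end
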